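(* Let $\theta_1,\theta_2\in(0,\pi/2)$ satisfy $\theta_1\cot\theta_1=(\pi-\theta_2)\cot\theta_2$. Then $$\frac{\theta_1}{\sin\theta_1}+\cos\theta_1>\frac{\pi-\theta_2}{\sin\theta_2}-\cos\theta_2.$$ *)

theory Defs
  imports Complex_Main
begin

end

theory Submission
  imports Defs
begin

lemma sincos_le: "0 \<le> (x::real) \<Longrightarrow> sin x * cos x \<le> x"
proof -
  assume "0 \<le> x"
  then have "sin (2*x) \<le> 2*x" by (intro sin_x_le_x) simp
  then show ?thesis by (simp add: sin_double)
qed

lemma trig1: "(x::real) * (cos y * cos y) + x * (sin y * sin y) = x"
proof -
  have "x * (cos y * cos y) + x * (sin y * sin y) = x * (sin y ^ 2 + cos y ^ 2)"
    by (simp only: power2_eq_square distrib_left add.commute)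
  also have "\<dots> = x" by simp
  finally show ?thesis .
qed

lemma h_mono:
  fixes a b :: real
  assumes "0 < a" "a \<le> b" "b < pi/2"
  shows "b * cos b / sin b \<le> a * cos a / sin a"
proof (rule DERIV_nonpos_imp_nonincreasing[OF assms(2), where f="\<lambda>t. t * cos t / sin t"])
  fix x assume x: "a \<le> x" "x \<le> b"
  then have sx: "sin x > 0" using assms by (intro sin_gt_zero) auto
  have "DERIV (\<lambda>t. t * cos t / sin t) x :> ((1 * cos x + x * (- sin x)) * sin x - x * cos x * cos x) / (sin x * sin x)"
    using sx by (auto intro!: derivative_eq_intros)
  moreover have "((1 * cos x + x * (- sin x)) * sin x - x * cos x * cos x) = sin x * cos x - x"
    using trig1[of x x] by (simp add: algebra_simps)
  moreover have "sin x * cos x - x \<le> 0" using sincos_le[of x] x assms by simp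
  ultimately show "\<exists>y. DERIV (\<lambda>t. t * cos t / sin t) x :> y \<and> y \<le> 0"
    by (metis divide_nonpos_pos mult_pos_pos sx)
qed

lemma tan_gt: "0 < (p::real) \<Longrightarrow> p < pi/2 \<Longrightarrow> p * cos p < sin p"
proof -
  assume p: "0 < p" "p < pi/2"
  let ?k = "\<lambda>t::real. sin t - t * cos t"
  have d: "DERIV ?k t :> t * sin t" for t
    by (auto intro!: derivative_eq_intros simp: algebra_simps)
  have "?k 0 \<le> ?k (p/2)"
  proof (rule DERIV_nonneg_imp_nondecreasing[where f="?k"])
    show "0 \<le> p/2" using p by simp
    fix t assume t: "0 \<le> t" "t \<le> p/2"
    have "sin t \<ge> 0" using t p by (intro sin_ge_zero) auto
    then show "\<exists>y. DERIV ?k t :> y \<and> y \<ge> 0" using d t by (metis mult_nonneg_nonneg)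
  qed
  moreover have "?k (p/2) < ?k p"
  proof (rule DERIV_pos_imp_increasing[where f="?k"])
    show "p/2 < p" using p by simp
    fix t assume t: "p/2 \<le> t" "t \<le> p"
    have "sin t > 0" using t p by (intro sin_gt_zero) auto
    moreover have "t > 0" using t p by simp
    ultimately show "\<exists>y. DERIV ?k t :> y \<and> y > 0" using d by (metis mult_pos_pos)
  qed
  ultimately show ?thesis by simp
qed

theorem corollary4p4:
  fixes \<theta>1 \<theta>2 :: real
  assumes "0 < \<theta>1" "\<theta>1 < pi / 2"
    and "0 < \<theta>2" "\<theta>2 < pi / 2"
    and "\<theta>1 * cot \<theta>1 = (pi - \<theta>2) * cot \<theta>2"
  shows "\<theta>1 / sin \<theta>1 + cos \<theta>1 > (pi - \<theta>2) / sin \<theta>2 - cos \<theta>2"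
proof -
  define c where "c = \<theta>1 * cos \<theta>1 / sin \<theta>1"
  have s1: "sin \<theta>1 > 0" "cos \<theta>1 > 0" using assms by (auto intro: sin_gt_zero cos_gt_zero)
  have s2: "sin \<theta>2 > 0" "cos \<theta>2 > 0" using assms by (auto intro: sin_gt_zero cos_gt_zero)
  have c2: "c = (pi - \<theta>2) * cos \<theta>2 / sin \<theta>2"
    using assms(5) by (simp add: c_def cot_def)
  have le: "\<theta>1 \<le> \<theta>2"
  proof (rule ccontr)
    assume "\<not> \<theta>1 \<le> \<theta>2"
    then have "\<theta>1 * cos \<theta>1 / sin \<theta>1 \<le> \<theta>2 * cos \<theta>2 / sin \<theta>2"
      using assms by (intro h_mono) auto
    moreover have "\<theta>2 * cos \<theta>2 / sin \<theta>2 < (pi - \<theta>2) * cos \<theta>2 / sin \<theta>2"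
      using s2 assms by (intro divide_strict_right_mono mult_strict_right_mono) auto
    ultimately show False using c2 c_def by linarith
  qed
  define A where "A = (\<lambda>t. c * cos t + t * sin t + cos t)"
  have "A \<theta>2 \<le> A \<theta>1"
  proof (rule DERIV_nonpos_imp_nonincreasing[OF le, where f=A])
    fix x assume x: "\<theta>1 \<le> x" "x \<le> \<theta>2"
    have sx: "sin x > 0" using x assms by (intro sin_gt_zero) auto
    have "DERIV A x :> c * (- sin x) + (1 * sin x + x * cos x) - sin x"
      unfolding A_def by (auto intro!: derivative_eq_intros)
    moreover have "x * cos x / sin x \<le> c" unfolding c_def using x assms by (intro h_mono) auto
    then have "x * cos x \<le> c * sin x" using sx by (simp add: divide_le_eq)
    then have "c * (- sin x) + (1 * sin x + x * cos x) - sin x \<le> 0" by simp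
    ultimately show "\<exists>y. DERIV A x :> y \<and> y \<le> 0" by blast
  qed
  moreover have "(pi/2 - \<theta>2) * cos (pi/2 - \<theta>2) < sin (pi/2 - \<theta>2)"
    using assms by (intro tan_gt) auto
  then have key: "(pi/2 - \<theta>2) * sin \<theta>2 < cos \<theta>2" by (simp add: cos_diff sin_diff)
  have L: "\<theta>1 / sin \<theta>1 + cos \<theta>1 = A \<theta>1"
  proof -
    have "A \<theta>1 = \<theta>1 * (cos \<theta>1 ^ 2 + sin \<theta>1 ^ 2) / sin \<theta>1 + cos \<theta>1"
      unfolding A_def c_def using s1 trig1[of "\<theta>1" "\<theta>1"] by (simp add: field_simps power2_eq_square)
    then show ?thesis by simp
  qed
  have R: "(pi - \<theta>2) / sin \<theta>2 - cos \<theta>2 = c * cos \<theta>2 + (pi - \<theta>2) * sin \<theta>2 - cos \<theta>2"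
  proof -
    have "c * cos \<theta>2 + (pi - \<theta>2) * sin \<theta>2 = (pi - \<theta>2) * (cos \<theta>2 ^ 2 + sin \<theta>2 ^ 2) / sin \<theta>2"
      unfolding c2 using s2 trig1[of "pi - \<theta>2" "\<theta>2"] by (simp add: field_simps power2_eq_square)
    then show ?thesis by simp
  qed
  have "c * cos \<theta>2 + (pi - \<theta>2) * sin \<theta>2 - cos \<theta>2 < A \<theta>2"
    unfolding A_def using key by (simp add: algebra_simps)
  ultimately show ?thesis using L R by linarith
qed

end
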